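(* Assume $\|\phi_{y,x}\|\le\Phi$ for all inputs $x$ and outputs $y$, for some $\Phi>0$. Then there exist $M_1,M_2>0$ such that for all $\theta\in\Theta$, $$\frac1{N_1}\sum_{(x,y_w,y_\ell)\in\mathcal{D}_{\mathrm{DPO}}}\|g_{\mathrm{DPO}}(\theta;x,y_w,y_\ell)\|^2\le M_1^2,\qquad \frac1{N_2}\sum_{(x,y)\in\mathcal{D}_{\mathrm{SFT}}}\|g_{\mathrm{SFT}}(\theta;x,y)\|^2\le M_2^2.$$
   Context: $\Theta\subseteq\mathbb{R}^d$. Policy model: for a finite output set $\mathcal{Y}$, $\pi_\theta(y\mid x)=\exp(\theta^\top\phi_{y,x})/\sum_{y'\in\mathcal{Y}}\exp(\theta^\top\phi_{y',x})$ with feature vectors $\phi_{y,x}\in\mathbb{R}^d$; the reference policy is $\pi_{\mathrm{ref}}=\pi_{\theta_{\mathrm{ref}}}$ for fixed $\theta_{\mathrm{ref}}$. Datasets $\mathcal{D}_{\mathrm{DPO}}=\{(x^{(i)},y_w^{(i)},y_\ell^{(i)})\}_{i=1}^{N_1}$ and $\mathcal{D}_{\mathrm{SFT}}=\{(x^{(i)},y^{(i)})\}_{i=1}^{N_2}$. With $\sigma$ the sigmoid and $\beta>0$, $h_\beta(\theta;x,y_w,y_\ell)=\beta\log\frac{\pi_\theta(y_w|x)}{\pi_{\mathrm{ref}}(y_w|x)}-\beta\log\frac{\pi_\theta(y_\ell|x)}{\pi_{\mathrm{ref}}(y_\ell|x)}$, $g_{\mathrm{DPO}}(\theta;x,y_w,y_\ell)=-(1-\sigma(h_\beta(\theta;x,y_w,y_\ell)))\nabla_\theta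 h_\beta(\theta;x,y_w,y_\ell)$, and $g_{\mathrm{SFT}}(\theta;x,y)=-\nabla_\theta\pi_\theta(y|x)/\pi_\theta(y|x)$. *)

theory Defs
  imports "HOL-Analysis.Analysis"
begin

definition grad :: "('a::euclidean_space \<Rightarrow> real) \<Rightarrow> 'a \<Rightarrow> 'a" where
  "grad f \<theta> = (THE v. (f has_derivative (\<lambda>h. v \<bullet> h)) (at \<theta>))"

definition sigmoid :: "real \<Rightarrow> real" where
  "sigmoid z = 1 / (1 + exp (- z))"

definition policy :: "('x \<Rightarrow> 'y::finite \<Rightarrow> real ^ 'd) \<Rightarrow> real ^ 'd \<Rightarrow> 'x \<Rightarrow> 'y \<Rightarrow> real" where
  "policy \<phi> \<theta> x y = exp (\<theta> \<bullet> \<phi> x y) / (\<Sum>y'\<in>UNIV. exp (\<theta> \<bullet> \<phi> x y'))"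

definition h_beta :: "('x \<Rightarrow> 'y::finite \<Rightarrow> real ^ 'd) \<Rightarrow> real ^ 'd \<Rightarrow> real \<Rightarrow> real ^ 'd
    \<Rightarrow> 'x \<Rightarrow> 'y \<Rightarrow> 'y \<Rightarrow> real" where
  "h_beta \<phi> \<theta>ref \<beta> \<theta> x yw yl =
     \<beta> * ln (policy \<phi> \<theta> x yw / policy \<phi> \<theta>ref x yw)
     - \<beta> * ln (policy \<phi> \<theta> x yl / policy \<phi> \<theta>ref x yl)"

definition g_DPO :: "('x \<Rightarrow> 'y::finite \<Rightarrow> real ^ 'd) \<Rightarrow> real ^ 'd \<Rightarrow> real \<Rightarrow> real ^ 'd
    \<Rightarrow> 'x \<Rightarrow> 'y \<Rightarrow> 'y \<Rightarrow> real ^ 'd" where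
  "g_DPO \<phi> \<theta>ref \<beta> \<theta> x yw yl =
     - ((1 - sigmoid (h_beta \<phi> \<theta>ref \<beta> \<theta> x yw yl))
        *\<^sub>R grad (\<lambda>t. h_beta \<phi> \<theta>ref \<beta> t x yw yl) \<theta>)"

definition g_SFT :: "('x \<Rightarrow> 'y::finite \<Rightarrow> real ^ 'd) \<Rightarrow> real ^ 'd \<Rightarrow> 'x \<Rightarrow> 'y \<Rightarrow> real ^ 'd" where
  "g_SFT \<phi> \<theta> x y = - ((1 / policy \<phi> \<theta> x y) *\<^sub>R grad (\<lambda>t. policy \<phi> t x y) \<theta>)"

end

theory Submission imports Defs begin

lemma grad_eqI:
  fixes f :: "'a::euclidean_space \<Rightarrow> real"
  assumes "(f has_derivative (\<lambda>h. v \<bullet> h)) (at \<theta>)"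
  shows "grad f \<theta> = v"
  unfolding grad_def
proof (rule the_equality)
  show "(f has_derivative (\<lambda>h. v \<bullet> h)) (at \<theta>)" by fact
  fix w assume "(f has_derivative (\<lambda>h. w \<bullet> h)) (at \<theta>)"
  then have "(\<lambda>h. w \<bullet> h) = (\<lambda>h. v \<bullet> h)" using assms has_derivative_unique by blast
  then have "w \<bullet> (w - v) = v \<bullet> (w - v)" by metis
  then have "(w - v) \<bullet> (w - v) = 0" by (simp add: inner_diff_left)
  then show "w = v" by simp
qed

lemma policy_pos: "policy \<phi> \<theta> x y > 0"
  unfolding policy_def by (intro divide_pos_pos sum_pos) auto

lemma ln_policy: "ln (policy \<phi> \<theta> x y) = \<theta> \<bullet> \<phi> x y - ln (\<Sum>y'\<in>UNIV. exp (\<theta> \<bullet> \<phi> x y'))"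
proof -
  have "(\<Sum>y'\<in>UNIV. exp (\<theta> \<bullet> \<phi> x y')) > 0" by (intro sum_pos) auto
  then show ?thesis unfolding policy_def by (simp add: ln_div)
qed

lemma h_beta_lin:
  "h_beta \<phi> \<theta>ref \<beta> \<theta> x yw yl = \<beta> * (\<theta> \<bullet> (\<phi> x yw - \<phi> x yl))
     - \<beta> * ln (policy \<phi> \<theta>ref x yw) + \<beta> * ln (policy \<phi> \<theta>ref x yl)"
  unfolding h_beta_def
  using policy_pos[of \<phi> \<theta> x yw] policy_pos[of \<phi> \<theta>ref x yw]
        policy_pos[of \<phi> \<theta> x yl] policy_pos[of \<phi> \<theta>ref x yl]
  by (simp add: ln_div ln_policy[of \<phi> \<theta>] inner_diff_right algebra_simps)

lemma grad_h: "grad (\<lambda>t. h_beta \<phi> \<theta>ref \<beta> t x yw yl) \<theta> = \<beta> *\<^sub>R (\<phi> x yw - \<phi> x yl)"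
  unfolding h_beta_lin
  by (rule grad_eqI) (auto intro!: derivative_eq_intros simp: inner_commute algebra_simps)

lemma sigmoid_bounds: "0 < sigmoid z" "sigmoid z < 1"
  unfolding sigmoid_def by (auto simp: divide_simps add_pos_pos)

lemma g_DPO_bound:
  assumes "\<beta> > 0" "\<forall>x y. norm (\<phi> x y) \<le> \<Phi>"
  shows "norm (g_DPO \<phi> \<theta>ref \<beta> \<theta> x yw yl) \<le> 2 * \<beta> * \<Phi>"
proof -
  let ?s = "sigmoid (h_beta \<phi> \<theta>ref \<beta> \<theta> x yw yl)"
  have n: "norm (\<phi> x yw - \<phi> x yl) \<le> 2 * \<Phi>"
    using norm_triangle_ineq4[of "\<phi> x yw" "\<phi> x yl"] assms(2) by smt
  have "norm (g_DPO \<phi> \<theta>ref \<beta> \<theta> x yw yl) = \<bar>1 - ?s\<bar> * (\<beta> * norm (\<phi> x yw - \<phi> x yl))"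
    unfolding g_DPO_def grad_h using assms(1) by (simp add: abs_mult)
  also have "\<dots> \<le> 1 * (\<beta> * (2 * \<Phi>))"
    using sigmoid_bounds[of "h_beta \<phi> \<theta>ref \<beta> \<theta> x yw yl"] n assms(1)
    by (intro mult_mono) auto
  finally show ?thesis by simp
qed

lemma grad_policy:
  fixes \<phi> :: "'x \<Rightarrow> 'y::finite \<Rightarrow> real ^ 'd"
    and \<theta> :: "real ^ 'd" and x :: 'x and y :: 'y
  defines "S \<equiv> (\<Sum>y'\<in>UNIV. exp (\<theta> \<bullet> \<phi> x y'))"
  defines "w \<equiv> (1 / S) *\<^sub>R (\<Sum>y'\<in>UNIV. exp (\<theta> \<bullet> \<phi> x y') *\<^sub>R \<phi> x y')"
  shows "grad (\<lambda>t. policy \<phi> t x y) \<theta> = policy \<phi> \<theta> x y *\<^sub>R (\<phi> x y - w)"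
proof (rule grad_eqI)
  have Spos: "S > 0" unfolding S_def by (intro sum_pos) auto
  have d1: "\<And>z. ((\<lambda>t. exp (t \<bullet> \<phi> x z)) has_derivative (\<lambda>h. exp (\<theta> \<bullet> \<phi> x z) * (h \<bullet> \<phi> x z))) (at \<theta>)"
    by (auto intro!: derivative_eq_intros)
  have d2: "((\<lambda>t. (\<Sum>y'\<in>UNIV. exp (t \<bullet> \<phi> x y'))) has_derivative (\<lambda>h. (\<Sum>y'\<in>UNIV. exp (\<theta> \<bullet> \<phi> x y') * (h \<bullet> \<phi> x y')))) (at \<theta>)"
    by (rule has_derivative_sum) (rule d1)
  have "((\<lambda>t. exp (t \<bullet> \<phi> x y) / (\<Sum>y'\<in>UNIV. exp (t \<bullet> \<phi> x y'))) has_derivative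
     (\<lambda>h. ((exp (\<theta> \<bullet> \<phi> x y) * (h \<bullet> \<phi> x y)) * S - exp (\<theta> \<bullet> \<phi> x y) * (\<Sum>y'\<in>UNIV. exp (\<theta> \<bullet> \<phi> x y') * (h \<bullet> \<phi> x y'))) / (S * S))) (at \<theta>)"
    unfolding S_def using has_derivative_divide'[OF d1 d2] Spos S_def by simp
  moreover have "(\<lambda>h. ((exp (\<theta> \<bullet> \<phi> x y) * (h \<bullet> \<phi> x y)) * S - exp (\<theta> \<bullet> \<phi> x y) * (\<Sum>y'\<in>UNIV. exp (\<theta> \<bullet> \<phi> x y') * (h \<bullet> \<phi> x y'))) / (S * S))
     = (\<lambda>h. (policy \<phi> \<theta> x y *\<^sub>R (\<phi> x y - w)) \<bullet> h)"
  proof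
    fix h
    have "(\<Sum>y'\<in>UNIV. exp (\<theta> \<bullet> \<phi> x y') * (h \<bullet> \<phi> x y')) = (\<Sum>y'\<in>UNIV. exp (\<theta> \<bullet> \<phi> x y') *\<^sub>R \<phi> x y') \<bullet> h"
      by (simp add: inner_sum_left inner_sum_right inner_commute)
    then show "((exp (\<theta> \<bullet> \<phi> x y) * (h \<bullet> \<phi> x y)) * S - exp (\<theta> \<bullet> \<phi> x y) * (\<Sum>y'\<in>UNIV. exp (\<theta> \<bullet> \<phi> x y') * (h \<bullet> \<phi> x y'))) / (S * S)
     = (policy \<phi> \<theta> x y *\<^sub>R (\<phi> x y - w)) \<bullet> h"
      unfolding policy_def w_def S_def[symmetric] using Spos
      by (simp add: inner_diff_left inner_diff_right inner_commute field_simps)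
  qed
  ultimately show "((\<lambda>t. policy \<phi> t x y) has_derivative (\<lambda>h. (policy \<phi> \<theta> x y *\<^sub>R (\<phi> x y - w)) \<bullet> h)) (at \<theta>)"
    unfolding policy_def by simp
qed


lemma g_SFT_bound:
  fixes \<phi> :: "'x \<Rightarrow> 'y::finite \<Rightarrow> real ^ 'd"
  assumes "\<forall>x y. norm (\<phi> x y) \<le> \<Phi>"
  shows "norm (g_SFT \<phi> \<theta> x y) \<le> 2 * \<Phi>"
proof -
  define S where "S = (\<Sum>y'\<in>UNIV. exp (\<theta> \<bullet> \<phi> x y'))"
  define w where "w = (1 / S) *\<^sub>R (\<Sum>y'\<in>UNIV. exp (\<theta> \<bullet> \<phi> x y') *\<^sub>R \<phi> x y')"
  have Spos: "S > 0" unfolding S_def by (intro sum_pos) auto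
  have g: "g_SFT \<phi> \<theta> x y = - (\<phi> x y - w)"
    unfolding g_SFT_def grad_policy w_def S_def using policy_pos[of \<phi> \<theta> x y] by simp
  have "norm (\<Sum>y'\<in>UNIV. exp (\<theta> \<bullet> \<phi> x y') *\<^sub>R \<phi> x y') \<le> (\<Sum>y'\<in>UNIV. norm (exp (\<theta> \<bullet> \<phi> x y') *\<^sub>R \<phi> x y'))"
    by (rule norm_sum)
  also have "\<dots> \<le> (\<Sum>y'\<in>UNIV. exp (\<theta> \<bullet> \<phi> x y') * \<Phi>)"
    using assms by (intro sum_mono) (simp add: mult_left_mono)
  also have "\<dots> = S * \<Phi>" unfolding S_def by (simp add: sum_distrib_right)
  finally have "norm w \<le> \<Phi>" unfolding w_def using Spos by (simp add: field_simps)
  then have "norm (\<phi> x y - w) \<le> 2 * \<Phi>"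
    using norm_triangle_ineq4[of "\<phi> x y" w] assms by smt
  then show ?thesis by (simp add: g norm_minus_commute)
qed

lemma avg_bound:
  assumes "\<And>z. f z \<le> B" "0 \<le> B"
  shows "(1 / real (length xs)) * sum_list (map f xs) \<le> B"
proof -
  have "sum_list (map f xs) \<le> real (length xs) * B"
    by (induction xs) (auto simp: algebra_simps intro: add_mono assms)
  then show ?thesis using assms(2)
    by (cases "xs = []") (auto simp: field_simps)
qed

theorem propositionA1:
  fixes \<phi> :: "'x \<Rightarrow> 'y::finite \<Rightarrow> real ^ 'd"
    and \<Theta> :: "(real ^ 'd) set"
    and \<theta>ref :: "real ^ 'd"
    and \<beta> \<Phi> :: real
    and D_DPO :: "('x \<times> 'y \<times> 'y) list"
    and D_SFT :: "('x \<times> 'y) list"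
  assumes "\<beta> > 0"
    and "\<Phi> > 0"
    and "\<forall>x y. norm (\<phi> x y) \<le> \<Phi>"
  shows "\<exists>M1 M2. M1 > 0 \<and> M2 > 0 \<and> (\<forall>\<theta>\<in>\<Theta>.
     (1 / real (length D_DPO)) * (\<Sum>(x, yw, yl)\<leftarrow>D_DPO. (norm (g_DPO \<phi> \<theta>ref \<beta> \<theta> x yw yl))\<^sup>2) \<le> M1\<^sup>2
   \<and> (1 / real (length D_SFT)) * (\<Sum>(x, y)\<leftarrow>D_SFT. (norm (g_SFT \<phi> \<theta> x y))\<^sup>2) \<le> M2\<^sup>2)"
proof (intro exI conjI ballI)
  show "0 < 2 * \<beta> * \<Phi>" "0 < 2 * \<Phi>" using assms by auto
  fix \<theta> assume "\<theta> \<in> \<Theta>"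
  show "(1 / real (length D_DPO)) * (\<Sum>(x, yw, yl)\<leftarrow>D_DPO. (norm (g_DPO \<phi> \<theta>ref \<beta> \<theta> x yw yl))\<^sup>2) \<le> (2 * \<beta> * \<Phi>)\<^sup>2"
  proof (rule avg_bound)
    fix z :: "'x \<times> 'y \<times> 'y"
    obtain x yw yl where z: "z = (x, yw, yl)" by (cases z) auto
    have "norm (g_DPO \<phi> \<theta>ref \<beta> \<theta> x yw yl) \<le> 2 * \<beta> * \<Phi>" by (rule g_DPO_bound[OF assms(1) assms(3)])
    then show "(case z of (x, yw, yl) \<Rightarrow> (norm (g_DPO \<phi> \<theta>ref \<beta> \<theta> x yw yl))\<^sup>2) \<le> (2 * \<beta> * \<Phi>)\<^sup>2"
      unfolding z by (simp add: power_mono)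
  qed simp
  show "(1 / real (length D_SFT)) * (\<Sum>(x, y)\<leftarrow>D_SFT. (norm (g_SFT \<phi> \<theta> x y))\<^sup>2) \<le> (2 * \<Phi>)\<^sup>2"
  proof (rule avg_bound)
    fix z :: "'x \<times> 'y"
    obtain x y where z: "z = (x, y)" by (cases z) auto
    have "norm (g_SFT \<phi> \<theta> x y) \<le> 2 * \<Phi>" by (rule g_SFT_bound[OF assms(3)])
    then have "(norm (g_SFT \<phi> \<theta> x y))\<^sup>2 \<le> (2 * \<Phi>)\<^sup>2" by (rule power_mono) simp
    then show "(case z of (x, y) \<Rightarrow> (norm (g_SFT \<phi> \<theta> x y))\<^sup>2) \<le> (2 * \<Phi>)\<^sup>2"
      unfolding z by simp
  qed simp
qed

end
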